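(* Let $\Phi:\ell^\infty(\mathbb Z)\to\ell^\infty(\mathbb Z)$ be a bounded linear map commuting with the backward shift $B$, $(Bv)_n=v_{n+1}$, and let $\mathcal I$ be the identity map. If $\Phi$ is idempotent, then either $\Phi=\Phi^{s}$ (i.e. $\Phi$ is singular), or $\Phi=\mathcal I-\Psi$ where $\Psi$ is a singular, idempotent linear map commuting with $B$.
   Context: For such $\Phi$, let $\phi_0(v)=\Phi(v)_0$, so $\Phi(v)_n=\phi_0(B^nv)$. Write $\phi_0=\phi^{ac}+\phi^s$ with $\phi^{ac}$ weak*-continuous (given by an $\ell^1(\mathbb Z)$ vector) and $\phi^s$ vanishing on $c_0(\mathbb Z)$ (the null sequences), and set $\Phi^{ac}(v)=(\phi^{ac}(B^nv))_n$, $\Phi^s(v)=(\phi^s(B^nv))_n$. A linear map on $\ell^\infty(\mathbb Z)$ is called singular if it annihilates $c_0(\mathbb Z)$. *)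

theory Defs
  imports "HOL-Analysis.Analysis"
begin

text \<open>ell-infinity over the integers: bounded (automatically continuous, since int
  is discrete) real functions on int, i.e. the Banach space (int, real) bcontfun.\<close>

type_synonym linf = "(int, real) bcontfun"

definition backshift :: "linf \<Rightarrow> linf" where
  "backshift v = Bcontfun (\<lambda>n. apply_bcontfun v (n + 1))"

definition c0 :: "linf set" where
  "c0 = {v. (apply_bcontfun v \<longlongrightarrow> 0) at_top \<and> (apply_bcontfun v \<longlongrightarrow> 0) at_bot}"

definition singular_map :: "(linf \<Rightarrow> linf) \<Rightarrow> bool" where
  "singular_map \<Phi> \<longleftrightarrow> (\<forall>v\<in>c0. \<Phi> v = 0)"

end

theory Submission
  imports Defs
begin


lemma has_sum_finite_swap:
  fixes f :: "'j \<Rightarrow> 'k \<Rightarrow> complex"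
  assumes "finite F" "\<And>j. j \<in> F \<Longrightarrow> f j summable_on A"
  shows "((\<lambda>k. \<Sum>j\<in>F. f j k) has_sum (\<Sum>j\<in>F. infsum (f j) A)) A"
  using assms
proof (induction F rule: finite_induct)
  case empty then show ?case by (simp add: has_sum_0)
next
  case (insert x F)
  then show ?case by (simp add: has_sum_add)
qed

lemma root_sum:
  fixes N :: nat and l :: int
  assumes N: "N > 0"
  shows "(\<Sum>j<N. cis (2 * pi * real_of_int l * real j / real N)) = (if int N dvd l then of_nat N else 0)"
proof -
  define \<omega> where "\<omega> = cis (2 * pi * real_of_int l / real N)"
  have t: "cis (2 * pi * real_of_int l * real j / real N) = \<omega> ^ j" for j
  proof -
    have "\<omega> ^ j = cis (real j * (2 * pi * real_of_int l / real N))" unfolding \<omega>_def by (rule Complex.DeMoivre)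
    also have "real j * (2 * pi * real_of_int l / real N) = 2 * pi * real_of_int l * real j / real N" by simp
    finally show ?thesis by simp
  qed
  show ?thesis
  proof (cases "int N dvd l")
    case True
    then obtain q where q: "l = int N * q" by blast
    have "cis (2 * pi * real_of_int l * real j / real N) = 1" for j
    proof -
      have "2 * pi * real_of_int l * real j / real N = 2 * pi * real_of_int (q * int j)"
        using N by (simp add: q field_simps)
      then show ?thesis by (simp add: cis_multiple_2pi)
    qed
    then show ?thesis using True by simp
  next
    case False
    have "\<omega> \<noteq> 1"
    proof
      assume "\<omega> = 1"
      then have "cos (2 * pi * real_of_int l / real N) = 1"
        unfolding \<omega>_def by (metis cis.sel(1) one_complex.sel(1))
      then obtain n :: int where n: "2 * pi * real_of_int l / real N = real_of_int n * (2 * pi)"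
        by (auto simp: cos_one_2pi_int)
      then have "real_of_int l = real_of_int n * real N" using N by (simp add: field_simps)
      then have "l = n * int N" by (metis of_int_eq_iff of_int_mult of_int_of_nat_eq)
      then show False using False by simp
    qed
    moreover have "\<omega> ^ N = 1"
    proof -
      have "\<omega> ^ N = cis (real N * (2 * pi * real_of_int l / real N))" unfolding \<omega>_def by (rule Complex.DeMoivre)
      also have "\<dots> = cis (2 * pi * real_of_int l)" using N by simp
      also have "\<dots> = 1" by (simp add: cis_multiple_2pi)
      finally show ?thesis .
    qed
    ultimately show ?thesis using False by (simp add: t geometric_sum)
  qed
qed

lemma tail_small:
  fixes f :: "'a \<Rightarrow> real"
  assumes sf: "f summable_on UNIV" and nn: "\<And>k. f k \<ge> 0" and e: "\<epsilon> > 0"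
  shows "\<exists>X. finite X \<and> (\<forall>S. S \<inter> X = {} \<longrightarrow> infsum f S \<le> \<epsilon>)"
proof -
  obtain X where X: "finite X" "dist (sum f X) (infsum f UNIV) \<le> \<epsilon>"
    using infsum_finite_approximation[OF sf e] by blast
  have "infsum f S \<le> \<epsilon>" if "S \<inter> X = {}" for S
  proof -
    have s1: "f summable_on S" by (rule summable_on_subset_banach[OF sf]) auto
    have s2: "f summable_on X" using X(1) by simp
    have "infsum f S + sum f X = infsum f (S \<union> X)"
      using infsum_Un_disjoint[OF s1 s2 that] X(1) by simp
    also have "\<dots> \<le> infsum f UNIV"
      by (rule infsum_mono2) (auto simp: nn sf intro: summable_on_subset_banach[OF sf])
    finally show ?thesis using X(2) by (simp add: dist_real_def)
  qed
  with X(1) show ?thesis by blast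
qed

lemma finite_int_bound:
  fixes X :: "int set"
  assumes "finite X"
  shows "\<exists>M. \<forall>x\<in>X. \<bar>x\<bar> \<le> M"
proof -
  have "\<forall>x\<in>X. \<bar>x\<bar> \<le> (\<Sum>y\<in>X. \<bar>y\<bar>)" using assms by (auto intro!: member_le_sum)
  then show ?thesis by blast
qed

lemma bij_shift: "bij_betw (\<lambda>k::int. k + c) UNIV UNIV"
  by (rule bij_betwI[where g="\<lambda>k. k - c"]) auto

lemma shifted_summable:
  fixes f :: "int \<Rightarrow> real"
  assumes "f summable_on UNIV"
  shows "(\<lambda>k. f (k + c)) summable_on UNIV"
  using summable_on_reindex_bij_betw[OF bij_shift[of c], of f] assms by simp

lemma shifted_infsum:
  fixes f :: "int \<Rightarrow> 'a::{topological_comm_monoid_add,t2_space}"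
  shows "(\<Sum>\<^sub>\<infinity>k. f (k + c)) = infsum f UNIV"
  using infsum_reindex_bij_betw[OF bij_shift[of c], of f] by simp

lemma conv_product:
  fixes b :: "int \<Rightarrow> complex"
  assumes sb: "(\<lambda>k. norm (b k)) summable_on UNIV"
    and conv: "\<And>m. b m = (\<Sum>\<^sub>\<infinity>j. b j * b (m - j))"
  shows "(\<Sum>\<^sub>\<infinity>k. b k * cis (real_of_int k * t)) * (\<Sum>\<^sub>\<infinity>k. b k * cis (real_of_int k * t))
          = (\<Sum>\<^sub>\<infinity>k. b k * cis (real_of_int k * t))"
proof -
  define g where "g k = b k * cis (real_of_int k * t)" for k
  define h where "h j m = b j * b (m - j) * cis (real_of_int m * t)" for j m
  define S where "S = (\<Sum>\<^sub>\<infinity>k. norm (b k))"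
  have hn: "norm (h j m) = norm (b j) * norm (b (m - j))" for j m
    by (simp add: h_def norm_mult)
  have inner: "(\<lambda>m. norm (h j m)) summable_on UNIV" for j
  proof -
    have "(\<lambda>m. norm (b (m + (-j)))) summable_on UNIV" by (rule shifted_summable[OF sb])
    then have "(\<lambda>m. norm (b j) * norm (b (m + (-j)))) summable_on UNIV"
      by (rule summable_on_cmult_right)
    then show ?thesis by (simp add: hn)
  qed
  have innersum: "(\<Sum>\<^sub>\<infinity>m. norm (h j m)) = norm (b j) * S" for j
  proof -
    have "(\<Sum>\<^sub>\<infinity>m. norm (h j m)) = (\<Sum>\<^sub>\<infinity>m. norm (b j) * norm (b (m + (-j))))" by (simp add: hn)
    also have "\<dots> = norm (b j) * (\<Sum>\<^sub>\<infinity>m. norm (b (m + (-j))))" by (rule infsum_cmult_right')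
    also have "\<dots> = norm (b j) * S" unfolding S_def using shifted_infsum[of "\<lambda>k. norm (b k)" "-j"] by simp
    finally show ?thesis .
  qed
  have pair: "(\<lambda>(j, m). h j m) summable_on UNIV \<times> UNIV"
  proof (rule abs_summable_summable)
    have "(\<lambda>j. norm (b j) * S) summable_on UNIV" using sb by (rule summable_on_cmult_left)
    then have outer: "(\<lambda>j. norm (\<Sum>\<^sub>\<infinity>m. norm (h j m))) summable_on UNIV"
      by (simp add: innersum S_def infsum_nonneg)
    show "(\<lambda>x. norm (case x of (j, m) \<Rightarrow> h j m)) summable_on UNIV \<times> UNIV"
      by (rule Infinite_Sum.abs_summable_on_Sigma_iff[THEN iffD2]) (use inner outer in auto)
  qed
  have sg: "g summable_on UNIV"
    by (rule abs_summable_summable) (simp add: g_def norm_mult sb)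
  have "(\<Sum>\<^sub>\<infinity>k. g k) * (\<Sum>\<^sub>\<infinity>k. g k) = (\<Sum>\<^sub>\<infinity>j. g j * (\<Sum>\<^sub>\<infinity>k. g k))"
    by (rule infsum_cmult_left'[symmetric])
  also have "\<dots> = (\<Sum>\<^sub>\<infinity>j. \<Sum>\<^sub>\<infinity>m. h j m)"
  proof (rule infsum_cong)
    fix j
    have "g j * (\<Sum>\<^sub>\<infinity>k. g k) = (\<Sum>\<^sub>\<infinity>l. g j * g l)" by (rule infsum_cmult_right'[symmetric])
    also have "\<dots> = (\<Sum>\<^sub>\<infinity>l. h j (l + j))"
    proof (rule infsum_cong)
      fix l
      have "cis (real_of_int (l + j) * t) = cis (real_of_int j * t) * cis (real_of_int l * t)"
        by (simp add: cis_mult distrib_right add.commute)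
      then show "g j * g l = h j (l + j)" by (simp add: g_def h_def)
    qed
    also have "\<dots> = (\<Sum>\<^sub>\<infinity>m. h j m)" by (rule shifted_infsum[of "h j"])
    finally show "g j * (\<Sum>\<^sub>\<infinity>k. g k) = (\<Sum>\<^sub>\<infinity>m. h j m)" .
  qed
  also have "\<dots> = (\<Sum>\<^sub>\<infinity>m. \<Sum>\<^sub>\<infinity>j. h j m)"
    by (rule infsum_swap_banach[OF pair])
  also have "\<dots> = (\<Sum>\<^sub>\<infinity>m. g m)"
  proof (rule infsum_cong)
    fix m
    have "(\<Sum>\<^sub>\<infinity>j. h j m) = (\<Sum>\<^sub>\<infinity>j. b j * b (m - j)) * cis (real_of_int m * t)"
      unfolding h_def by (rule infsum_cmult_left')
    then show "(\<Sum>\<^sub>\<infinity>j. h j m) = g m" using conv[of m] by (simp add: g_def)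
  qed
  finally show ?thesis unfolding g_def .
qed

lemma fourier_cont:
  fixes b :: "int \<Rightarrow> complex"
  assumes sb: "(\<lambda>k. norm (b k)) summable_on UNIV"
  shows "continuous_on UNIV (\<lambda>t. \<Sum>\<^sub>\<infinity>k. b k * cis (real_of_int k * t))"
proof (rule uniform_limit_theorem)
  define g where "g t k = b k * cis (real_of_int k * t)" for t k
  have ng: "norm (g t k) = norm (b k)" for t k by (simp add: g_def norm_mult)
  have sg: "g t summable_on A" for t A
    by (rule abs_summable_summable, rule summable_on_subset_banach[OF _ subset_UNIV]) (simp add: ng sb)
  show "\<forall>\<^sub>F F in finite_subsets_at_top UNIV. continuous_on UNIV (\<lambda>t. \<Sum>k\<in>F. b k * cis (real_of_int k * t))"
    by (intro eventually_finite_subsets_at_top_weakI) (auto intro!: continuous_intros)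
  show "finite_subsets_at_top UNIV \<noteq> bot" by simp
  show "uniform_limit UNIV (\<lambda>F t. \<Sum>k\<in>F. b k * cis (real_of_int k * t))
          (\<lambda>t. \<Sum>\<^sub>\<infinity>k. b k * cis (real_of_int k * t)) (finite_subsets_at_top UNIV)"
    unfolding uniform_limit_iff
  proof (intro allI impI)
    fix e :: real assume e: "e > 0"
    then obtain X where X: "finite X" "\<And>S. S \<inter> X = {} \<Longrightarrow> (\<Sum>\<^sub>\<infinity>k\<in>S. norm (b k)) \<le> e/2"
      using tail_small[OF sb, of "e/2"] by auto
    show "\<forall>\<^sub>F F in finite_subsets_at_top UNIV. \<forall>t\<in>UNIV. dist (\<Sum>k\<in>F. b k * cis (real_of_int k * t)) (\<Sum>\<^sub>\<infinity>k. b k * cis (real_of_int k * t)) < e"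
      unfolding eventually_finite_subsets_at_top
    proof (intro exI[of _ X] conjI allI impI ballI)
      fix Y t assume Y: "finite Y \<and> X \<subseteq> Y \<and> Y \<subseteq> UNIV"
      have split: "infsum (g t) UNIV = infsum (g t) Y + infsum (g t) (- Y)"
      proof -
        have "infsum (g t) (Y \<union> - Y) = infsum (g t) Y + infsum (g t) (- Y)"
          by (rule infsum_Un_disjoint[OF sg sg]) auto
        then show ?thesis by simp
      qed
      have "norm (infsum (g t) (- Y)) \<le> (\<Sum>\<^sub>\<infinity>k\<in>- Y. norm (g t k))"
        by (rule norm_infsum_bound) (rule summable_on_subset_banach[OF _ subset_UNIV], simp add: ng sb)
      also have "\<dots> = (\<Sum>\<^sub>\<infinity>k\<in>- Y. norm (b k))" by (simp add: ng)
      also have "\<dots> \<le> e/2" using X(2)[of "- Y"] Y by auto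
      finally have "norm (infsum (g t) (- Y)) < e" using e by simp
      then show "dist (\<Sum>k\<in>Y. b k * cis (real_of_int k * t)) (\<Sum>\<^sub>\<infinity>k. b k * cis (real_of_int k * t)) < e"
        using split Y by (simp add: g_def[abs_def] dist_norm norm_minus_commute)
    qed (use X in auto)
  qed
qed

lemma idem_l1:
  fixes b :: "int \<Rightarrow> complex"
  assumes sb: "(\<lambda>k. norm (b k)) summable_on UNIV"
    and conv: "\<And>m. b m = (\<Sum>\<^sub>\<infinity>j. b j * b (m - j))"
  shows "(\<forall>m. b m = 0) \<or> (\<forall>m. b m = (if m = 0 then 1 else 0))"
proof -
  define A where "A t = (\<Sum>\<^sub>\<infinity>k. b k * cis (real_of_int k * t))" for t
  have sbs: "b summable_on S" for S
    by (rule abs_summable_summable, rule summable_on_subset_banach[OF sb subset_UNIV])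
  have AA: "A t * A t = A t" for t unfolding A_def by (rule conv_product[OF sb conv])
  have A01: "A t = 0 \<or> A t = 1" for t
  proof -
    have "A t * (A t - 1) = 0" using AA[of t] by (simp add: algebra_simps)
    then show ?thesis by auto
  qed
  have cont: "continuous_on UNIV A" unfolding A_def[abs_def] by (rule fourier_cont[OF sb])
  have "A constant_on UNIV"
  proof (rule continuous_discrete_range_constant[OF connected_UNIV cont])
    fix x :: real
    show "\<exists>e>0. \<forall>y. y \<in> UNIV \<and> A y \<noteq> A x \<longrightarrow> e \<le> norm (A y - A x)"
    proof (intro exI[of _ 1] conjI allI impI)
      fix y assume "y \<in> UNIV \<and> A y \<noteq> A x"
      then show "1 \<le> norm (A y - A x)" using A01[of x] A01[of y] by auto
    qed simp
  qed
  then obtain c where c: "\<And>t. A t = c" unfolding constant_on_def by blast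
  have c01: "c = 0 \<or> c = 1" using A01[of 0] c[of 0] by auto
  have avg: "(\<Sum>\<^sub>\<infinity>k\<in>{k. int N dvd k - m}. b k) = (if int N dvd m then c else 0)"
    if N: "N > 0" for N :: nat and m :: int
  proof -
    define f where "f j k = b k * cis (2 * pi * real_of_int (k - m) * real j / real N)" for j :: nat and k
    have fsum: "f j summable_on UNIV" for j
      by (rule abs_summable_summable) (simp add: f_def norm_mult sb)
    have "(\<Sum>j<N. A (2 * pi * real j / real N) * cis (2 * pi * real_of_int (-m) * real j / real N))
        = (\<Sum>j<N. infsum (f j) UNIV)"
    proof (rule sum.cong[OF refl])
      fix j assume "j \<in> {..<N}"
      have "A (2 * pi * real j / real N) * cis (2 * pi * real_of_int (-m) * real j / real N)
          = (\<Sum>\<^sub>\<infinity>k. b k * cis (real_of_int k * (2 * pi * real j / real N)) * cis (2 * pi * real_of_int (-m) * real j / real N))"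
        unfolding A_def by (rule infsum_cmult_left'[symmetric])
      also have "\<dots> = infsum (f j) UNIV"
      proof (rule infsum_cong)
        fix k
        have "real_of_int k * (2 * pi * real j / real N) + 2 * pi * real_of_int (-m) * real j / real N
              = 2 * pi * real_of_int (k - m) * real j / real N"
          using N by (simp add: field_simps)
        then show "b k * cis (real_of_int k * (2 * pi * real j / real N)) * cis (2 * pi * real_of_int (-m) * real j / real N) = f j k"
          unfolding f_def by (simp add: cis_mult mult.assoc)
      qed
      finally show "A (2 * pi * real j / real N) * cis (2 * pi * real_of_int (-m) * real j / real N) = infsum (f j) UNIV" .
    qed
    also have "\<dots> = (\<Sum>\<^sub>\<infinity>k. \<Sum>j<N. f j k)"
      by (rule infsumI[symmetric], rule has_sum_finite_swap) (auto simp: fsum)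
    also have "\<dots> = (\<Sum>\<^sub>\<infinity>k. b k * (if int N dvd k - m then of_nat N else 0))"
    proof (rule infsum_cong)
      fix k
      have "(\<Sum>j<N. f j k) = b k * (\<Sum>j<N. cis (2 * pi * real_of_int (k - m) * real j / real N))"
        unfolding f_def by (simp add: sum_distrib_left)
      then show "(\<Sum>j<N. f j k) = b k * (if int N dvd k - m then of_nat N else 0)"
        by (simp only: root_sum[OF N])
    qed
    also have "\<dots> = (\<Sum>\<^sub>\<infinity>k\<in>{k. int N dvd k - m}. of_nat N * b k)"
      by (rule infsum_cong_neutral) auto
    also have "\<dots> = of_nat N * (\<Sum>\<^sub>\<infinity>k\<in>{k. int N dvd k - m}. b k)"
      by (rule infsum_cmult_right')
    finally have eq1: "of_nat N * (\<Sum>\<^sub>\<infinity>k\<in>{k. int N dvd k - m}. b k)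
        = (\<Sum>j<N. A (2 * pi * real j / real N) * cis (2 * pi * real_of_int (-m) * real j / real N))" ..
    also have "\<dots> = c * (\<Sum>j<N. cis (2 * pi * real_of_int (-m) * real j / real N))"
      by (simp add: c sum_distrib_left)
    also have "\<dots> = c * (if int N dvd m then of_nat N else 0)"
      by (simp only: root_sum[OF N] dvd_minus_iff)
    finally show ?thesis using N by (auto simp: mult.commute)
  qed
  have bm: "b m = (if m = 0 then c else 0)" for m
  proof -
    have le: "norm (b m - (if m = 0 then c else 0)) \<le> e" if e: "e > 0" for e
    proof -
      obtain X where X: "finite X" "\<And>S. S \<inter> X = {} \<Longrightarrow> (\<Sum>\<^sub>\<infinity>k\<in>S. norm (b k)) \<le> e"
        using tail_small[OF sb _ e] by auto
      obtain M where M: "\<forall>x\<in>X. \<bar>x\<bar> \<le> M" using finite_int_bound[OF X(1)] by blast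
      define N where "N = nat (\<bar>M\<bar> + \<bar>m\<bar>) + 1"
      have N0: "N > 0" by (simp add: N_def)
      have NM: "int N > \<bar>M\<bar> + \<bar>m\<bar>" by (simp add: N_def)
      define D where "D = {k. int N dvd k - m}"
      have mD: "m \<in> D" by (simp add: D_def)
      have disj: "(D - {m}) \<inter> X = {}"
      proof (rule ccontr)
        assume "(D - {m}) \<inter> X \<noteq> {}"
        then obtain k where k: "k \<in> D" "k \<noteq> m" "k \<in> X" by blast
        have "\<bar>int N\<bar> \<le> \<bar>k - m\<bar>" by (rule dvd_imp_le_int) (use k in \<open>auto simp: D_def\<close>)
        moreover have "\<bar>k\<bar> \<le> M" using M k by blast
        ultimately show False using NM by linarith
      qed
      have Dm: "D = insert m (D - {m})" using mD by blast
      have "infsum b D = b m + infsum b (D - {m})"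
        by (subst Dm, rule infsum_insert[OF sbs]) simp
      moreover have "infsum b D = (if m = 0 then c else 0)"
      proof -
        have "int N dvd m \<longleftrightarrow> m = 0"
        proof
          assume "int N dvd m"
          show "m = 0"
          proof (rule ccontr)
            assume "m \<noteq> 0"
            then have "\<bar>int N\<bar> \<le> \<bar>m\<bar>" using \<open>int N dvd m\<close> by (rule dvd_imp_le_int)
            then show False using NM by linarith
          qed
        qed simp
        then show ?thesis using avg[OF N0, of m] unfolding D_def by simp
      qed
      moreover have "norm (infsum b (D - {m})) \<le> (\<Sum>\<^sub>\<infinity>k\<in>D - {m}. norm (b k))"
        by (rule norm_infsum_bound, rule summable_on_subset_banach[OF sb subset_UNIV])
      moreover have "(\<Sum>\<^sub>\<infinity>k\<in>D - {m}. norm (b k)) \<le> e" using X(2)[OF disj] .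
      ultimately show ?thesis by (simp add: norm_minus_commute)
    qed
    have "norm (b m - (if m = 0 then c else 0)) \<le> 0"
      by (rule field_le_epsilon) (use le in simp)
    then show ?thesis by simp
  qed
  show ?thesis using c01 bm by auto
qed



lemma mkB:
  fixes f :: "int \<Rightarrow> real"
  assumes "\<And>n. \<bar>f n\<bar> \<le> b"
  shows "apply_bcontfun (Bcontfun f) = f"
  by (rule Bcontfun_inverse[OF bcontfun_normI[where b=b]]) (auto simp: assms)

definition ee :: "int \<Rightarrow> linf" where
  "ee k = Bcontfun (\<lambda>n. if n = k then 1 else 0)"

lemma ee_apply[simp]: "apply_bcontfun (ee k) n = (if n = k then 1 else 0)"
  unfolding ee_def by (subst mkB[where b=1]) auto

lemma backshift_apply[simp]: "apply_bcontfun (backshift v) n = apply_bcontfun v (n+1)"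
proof -
  have "\<bar>apply_bcontfun v (m+1)\<bar> \<le> norm v" for m
    using norm_bounded[of v "m+1"] by simp
  then show ?thesis unfolding backshift_def by (subst mkB[where b="norm v"]) auto
qed

lemma backshift_ee: "backshift (ee (k+1)) = ee k"
  by (rule bcontfun_eqI) auto

lemma apply_sum: "apply_bcontfun (sum f F) n = (\<Sum>i\<in>F. apply_bcontfun (f i) n)"
  by (induction F rule: infinite_finite_induct) auto

lemma apply_scale[simp]: "apply_bcontfun (c *\<^sub>R v) n = c * apply_bcontfun v n"
  by simp

lemma apply_diff[simp]: "apply_bcontfun (v - w) n = apply_bcontfun v n - apply_bcontfun w n"
  by simp

lemma apply_le_norm: "\<bar>apply_bcontfun v n\<bar> \<le> norm v"
  using norm_bounded[of v n] by simp

lemma shift_rel: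
  fixes \<Phi> :: "linf \<Rightarrow> linf"
  assumes comm: "\<forall>v. \<Phi> (backshift v) = backshift (\<Phi> v)"
  shows "apply_bcontfun (\<Phi> (ee k)) n = apply_bcontfun (\<Phi> (ee (k - n))) 0"
proof -
  have step: "apply_bcontfun (\<Phi> (ee (k+1))) (n+1) = apply_bcontfun (\<Phi> (ee k)) n" for k n
  proof -
    have "apply_bcontfun (\<Phi> (ee (k+1))) (n+1) = apply_bcontfun (backshift (\<Phi> (ee (k+1)))) n" by simp
    also have "\<dots> = apply_bcontfun (\<Phi> (ee k)) n" using comm backshift_ee by metis
    finally show ?thesis .
  qed
  have "\<forall>k. apply_bcontfun (\<Phi> (ee k)) n = apply_bcontfun (\<Phi> (ee (k - n))) 0"
  proof (induction n rule: int_induct[where k=0])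
    case base then show ?case by simp
  next
    case (step1 i) then show ?case using step[of "_ - 1" i] by (metis add_diff_cancel_right' diff_diff_eq diff_add_cancel)
  next
    case (step2 i) then show ?case using step[of _ "i - 1"] by (smt (verit))
  qed
  then show ?thesis by blast
qed

lemma a_summable:
  fixes \<Phi> :: "linf \<Rightarrow> linf"
  assumes bl: "bounded_linear \<Phi>"
  shows "(\<lambda>k. \<bar>apply_bcontfun (\<Phi> (ee k)) 0\<bar>) summable_on UNIV"
proof -
  define a where "a k = apply_bcontfun (\<Phi> (ee k)) 0" for k
  obtain K where K: "K > 0" "\<And>x. norm (\<Phi> x) \<le> norm x * K"
    using bounded_linear.pos_bounded[OF bl] by blast
  have lin: "linear \<Phi>" using bl bounded_linear.linear by blast
  have "(\<Sum>k\<in>F. \<bar>a k\<bar>) \<le> K" if F: "finite F" for F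
  proof -
    define v where "v = (\<Sum>k\<in>F. sgn (a k) *\<^sub>R ee k)"
    have vn: "apply_bcontfun v n = (if n \<in> F then sgn (a n) else 0)" for n
      unfolding v_def apply_sum using F by (simp add: if_distrib cong: if_cong)
    have "norm v \<le> 1"
      by (rule norm_bound) (auto simp: vn abs_sgn_eq)
    have "\<Phi> v = (\<Sum>k\<in>F. sgn (a k) *\<^sub>R \<Phi> (ee k))"
      unfolding v_def using lin by (simp add: real_vector.linear_sum linear_cmul)
    then have "apply_bcontfun (\<Phi> v) 0 = (\<Sum>k\<in>F. sgn (a k) * a k)"
      by (simp only: apply_sum apply_scale a_def)
    also have "\<dots> = (\<Sum>k\<in>F. \<bar>a k\<bar>)"
      by (intro sum.cong refl) (simp add: sgn_real_def abs_real_def)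
    finally have "apply_bcontfun (\<Phi> v) 0 = (\<Sum>k\<in>F. \<bar>a k\<bar>)" .
    then have "(\<Sum>k\<in>F. \<bar>a k\<bar>) \<le> \<bar>apply_bcontfun (\<Phi> v) 0\<bar>" by simp
    also have "\<dots> \<le> norm (\<Phi> v)" by (rule apply_le_norm)
    also have "\<dots> \<le> norm v * K" by (rule K(2))
    also have "\<dots> \<le> K" using \<open>norm v \<le> 1\<close> K(1) by (simp add: mult_le_cancel_right1)
    finally show ?thesis .
  qed
  then have "bdd_above (sum (\<lambda>k. \<bar>a k\<bar>) ` {F. F \<subseteq> UNIV \<and> finite F})"
    by (auto intro!: bdd_aboveI)
  then have "(\<lambda>k. \<bar>a k\<bar>) summable_on UNIV"
    by (intro nonneg_bdd_above_summable_on) auto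
  then show ?thesis unfolding a_def .
qed

lemma col_summable:
  fixes \<Phi> :: "linf \<Rightarrow> linf"
  assumes bl: "bounded_linear \<Phi>" and comm: "\<forall>v. \<Phi> (backshift v) = backshift (\<Phi> v)"
  shows "(\<lambda>k. \<bar>apply_bcontfun (\<Phi> (ee k)) n\<bar>) summable_on UNIV"
proof -
  have "(\<lambda>k. \<bar>apply_bcontfun (\<Phi> (ee (k + (-n)))) 0\<bar>) summable_on UNIV"
    using summable_on_reindex_bij_betw[OF bij_shift[of "-n"], of "\<lambda>k. \<bar>apply_bcontfun (\<Phi> (ee k)) 0\<bar>"]
      a_summable[OF bl] by simp
  then show ?thesis using shift_rel[OF comm] by simp
qed

lemma filterlim_sym_intervals:
  "filterlim (\<lambda>N::nat. {-int N..int N}) (finite_subsets_at_top UNIV) sequentially"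
  unfolding filterlim_finite_subsets_at_top
proof (intro allI impI)
  fix X :: "int set" assume "finite X \<and> X \<subseteq> UNIV"
  then have "\<forall>x\<in>X. \<bar>x\<bar> \<le> (\<Sum>y\<in>X. \<bar>y\<bar>)" by (auto intro!: member_le_sum)
  then obtain M where M: "\<And>x. x \<in> X \<Longrightarrow> \<bar>x\<bar> \<le> M" by blast
  show "\<forall>\<^sub>F N in sequentially. finite {-int N..int N} \<and> X \<subseteq> {-int N..int N} \<and> {-int N..int N} \<subseteq> UNIV"
    unfolding eventually_sequentially
  proof (intro exI[of _ "nat M"] allI impI)
    fix N assume "nat M \<le> N"
    then have "M \<le> int N" by linarith
    then show "finite {-int N..int N} \<and> X \<subseteq> {-int N..int N} \<and> {-int N..int N} \<subseteq> UNIV"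
      using M by force
  qed
qed

lemma phi_c0:
  fixes \<Phi> :: "linf \<Rightarrow> linf"
  assumes bl: "bounded_linear \<Phi>" and comm: "\<forall>v. \<Phi> (backshift v) = backshift (\<Phi> v)"
    and vc: "v \<in> c0"
  shows "apply_bcontfun (\<Phi> v) n = (\<Sum>\<^sub>\<infinity>k. apply_bcontfun v k * apply_bcontfun (\<Phi> (ee k)) n)"
proof -
  define I where "I N = {-int N..int N}" for N :: nat
  define vN where "vN N = (\<Sum>k\<in>I N. apply_bcontfun v k *\<^sub>R ee k)" for N
  have lin: "linear \<Phi>" using bl bounded_linear.linear by blast
  have vN_apply: "apply_bcontfun (vN N) k = (if k \<in> I N then apply_bcontfun v k else 0)" for N k
    unfolding vN_def apply_sum by (simp add: I_def if_distrib cong: if_cong)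
  have conv: "vN \<longlonglongrightarrow> v"
  proof (rule LIMSEQ_I)
    fix r :: real assume r: "r > 0"
    have t1: "((\<lambda>k. apply_bcontfun v k) \<longlongrightarrow> 0) at_top" and t2: "((\<lambda>k. apply_bcontfun v k) \<longlongrightarrow> 0) at_bot"
      using vc unfolding c0_def by auto
    have r2: "r/2 > 0" using r by simp
    have "\<forall>\<^sub>F k in at_top. \<bar>apply_bcontfun v k\<bar> < r/2" "\<forall>\<^sub>F k in at_bot. \<bar>apply_bcontfun v k\<bar> < r/2"
      using tendsto_iff[THEN iffD1, OF t1, rule_format, OF r2] tendsto_iff[THEN iffD1, OF t2, rule_format, OF r2]
      by (simp_all add: dist_real_def)
    then obtain M1 M2 where M1: "\<And>k. k \<ge> M1 \<Longrightarrow> \<bar>apply_bcontfun v k\<bar> < r/2"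
      and M2: "\<And>k. k \<le> M2 \<Longrightarrow> \<bar>apply_bcontfun v k\<bar> < r/2"
      unfolding eventually_at_top_linorder eventually_at_bot_linorder by blast
    show "\<exists>no. \<forall>N\<ge>no. norm (vN N - v) < r"
    proof (intro exI[of _ "nat (max \<bar>M1\<bar> \<bar>M2\<bar>)"] allI impI)
      fix N assume N: "nat (max \<bar>M1\<bar> \<bar>M2\<bar>) \<le> N"
      have "norm (vN N - v) \<le> r/2"
      proof (rule norm_bound)
        fix k
        show "norm (apply_bcontfun (vN N - v) k) \<le> r/2"
        proof (cases "k \<in> I N")
          case True then show ?thesis using r by (simp add: vN_apply)
        next
          case False
          then have "k \<ge> M1 \<or> k \<le> M2" using N unfolding I_def by auto
          then show ?thesis using False M1 M2 by (force simp: vN_apply)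
        qed
      qed
      then show "norm (vN N - v) < r" using r by simp
    qed
  qed
  have ev: "bounded_linear (\<lambda>w::linf. apply_bcontfun w n)"
    by (rule bounded_linear_intro[where K=1]) (auto simp: apply_le_norm)
  have lim1: "(\<lambda>N. apply_bcontfun (\<Phi> (vN N)) n) \<longlonglongrightarrow> apply_bcontfun (\<Phi> v) n"
    by (rule bounded_linear.tendsto[OF ev bounded_linear.tendsto[OF bl conv]])
  define f where "f k = apply_bcontfun v k * apply_bcontfun (\<Phi> (ee k)) n" for k
  have fs: "f summable_on UNIV"
  proof (rule abs_summable_summable)
    have "(\<lambda>k. norm v * \<bar>apply_bcontfun (\<Phi> (ee k)) n\<bar>) summable_on UNIV"
      using summable_on_cmult_right[OF col_summable[OF bl comm, of n], of "norm v"] by simp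
    then show "(\<lambda>x. norm (f x)) summable_on UNIV"
      by (rule summable_on_comparison_test)
         (auto simp: f_def abs_mult mult_right_mono apply_le_norm)
  qed
  have lim2: "(\<lambda>N. sum f (I N)) \<longlonglongrightarrow> infsum f UNIV"
    unfolding I_def by (rule filterlim_compose[OF infsum_tendsto[OF fs] filterlim_sym_intervals])
  have eq: "apply_bcontfun (\<Phi> (vN N)) n = sum f (I N)" for N
    unfolding vN_def using lin by (simp add: real_vector.linear_sum linear_cmul apply_sum f_def)
  show ?thesis using LIMSEQ_unique[OF lim1] lim2 unfolding eq f_def by blast
qed


lemma abs_small:
  fixes a :: "int \<Rightarrow> real"
  assumes sa: "(\<lambda>k. \<bar>a k\<bar>) summable_on UNIV" and e: "e > 0"
  shows "\<exists>M. \<forall>k. \<bar>k\<bar> > M \<longrightarrow> \<bar>a k\<bar> < e"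
proof -
  obtain X where X: "finite X" "\<And>S. S \<inter> X = {} \<Longrightarrow> (\<Sum>\<^sub>\<infinity>k\<in>S. \<bar>a k\<bar>) \<le> e/2"
    using tail_small[OF sa, of "e/2"] e by auto
  obtain M where M: "\<forall>x\<in>X. \<bar>x\<bar> \<le> M" using finite_int_bound[OF X(1)] by blast
  have "\<bar>a k\<bar> < e" if "\<bar>k\<bar> > M" for k
  proof -
    have "{k} \<inter> X = {}" using M that by force
    then have "(\<Sum>\<^sub>\<infinity>j\<in>{k}. \<bar>a j\<bar>) \<le> e/2" by (rule X(2))
    then show ?thesis using e by simp
  qed
  then show ?thesis by blast
qed

lemma backshift_diff: "backshift (v - w) = backshift v - backshift w"
  by (rule bcontfun_eqI) simp

lemma bij_uminus_int: "bij_betw (uminus :: int \<Rightarrow> int) UNIV UNIV"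
  by (rule bij_betwI[where g=uminus]) auto

theorem theorem2p3:
  fixes \<Phi> :: "linf \<Rightarrow> linf"
  assumes "bounded_linear \<Phi>"
    and "\<forall>v. \<Phi> (backshift v) = backshift (\<Phi> v)"
    and "\<Phi> \<circ> \<Phi> = \<Phi>"
  shows "singular_map \<Phi> \<or>
    (\<exists>\<Psi> :: linf \<Rightarrow> linf. linear \<Psi> \<and> singular_map \<Psi> \<and> \<Psi> \<circ> \<Psi> = \<Psi> \<and>
        (\<forall>v. \<Psi> (backshift v) = backshift (\<Psi> v)) \<and>
        \<Phi> = (\<lambda>v. v - \<Psi> v))"
proof -
  note bl = assms(1) and comm = assms(2) and idem = assms(3)
  have lin: "linear \<Phi>" using bl bounded_linear.linear by blast
  define a where "a k = apply_bcontfun (\<Phi> (ee k)) 0" for k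
  have sh: "apply_bcontfun (\<Phi> (ee k)) n = a (k - n)" for k n
    unfolding a_def by (rule shift_rel[OF comm])
  have sa: "(\<lambda>k. \<bar>a k\<bar>) summable_on UNIV" unfolding a_def by (rule a_summable[OF bl])
  define B where "B = (\<Sum>\<^sub>\<infinity>k. \<bar>a k\<bar>)"
  have aB: "\<bar>a i\<bar> \<le> B" for i
  proof -
    have "sum (\<lambda>k. \<bar>a k\<bar>) {i} \<le> B" unfolding B_def
      by (rule finite_sum_le_infsum[OF sa]) auto
    then show ?thesis by simp
  qed
  define w where "w = \<Phi> (ee 0)"
  have wn: "apply_bcontfun w n = a (- n)" for n unfolding w_def sh by simp
  have wc0: "w \<in> c0"
  proof -
    have "((\<lambda>n. apply_bcontfun w n) \<longlongrightarrow> 0) at_top"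
    proof (rule tendstoI)
      fix e :: real assume e: "e > 0"
      obtain M where M: "\<And>k. \<bar>k\<bar> > M \<Longrightarrow> \<bar>a k\<bar> < e" using abs_small[OF sa e] by blast
      show "\<forall>\<^sub>F n in at_top. dist (apply_bcontfun w n) 0 < e"
        unfolding eventually_at_top_linorder
        by (intro exI[of _ "\<bar>M\<bar> + 1"]) (auto simp: wn intro!: M)
    qed
    moreover have "((\<lambda>n. apply_bcontfun w n) \<longlongrightarrow> 0) at_bot"
    proof (rule tendstoI)
      fix e :: real assume e: "e > 0"
      obtain M where M: "\<And>k. \<bar>k\<bar> > M \<Longrightarrow> \<bar>a k\<bar> < e" using abs_small[OF sa e] by blast
      show "\<forall>\<^sub>F n in at_bot. dist (apply_bcontfun w n) 0 < e"
        unfolding eventually_at_bot_linorder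
        by (intro exI[of _ "- \<bar>M\<bar> - 1"]) (auto simp: wn intro!: M)
    qed
    ultimately show ?thesis unfolding c0_def by simp
  qed
  have Phiw: "\<Phi> w = w" unfolding w_def using idem by (metis comp_apply)
  have conv0: "a m = (\<Sum>\<^sub>\<infinity>k. a (-k) * a (k + m))" for m
  proof -
    have "apply_bcontfun (\<Phi> w) (-m) = (\<Sum>\<^sub>\<infinity>k. apply_bcontfun w k * apply_bcontfun (\<Phi> (ee k)) (-m))"
      by (rule phi_c0[OF bl comm wc0])
    then show ?thesis by (simp add: Phiw wn sh)
  qed
  have conv1: "a m = (\<Sum>\<^sub>\<infinity>j. a j * a (m - j))" for m
  proof -
    have "(\<Sum>\<^sub>\<infinity>j. a j * a (m - j)) = (\<Sum>\<^sub>\<infinity>k. a (- k) * a (m - (- k)))"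
      using infsum_reindex_bij_betw[OF bij_uminus_int, of "\<lambda>j. a j * a (m - j)"] by simp
    then show ?thesis using conv0[of m] by (simp add: add.commute)
  qed
  define b where "b k = complex_of_real (a k)" for k
  have sb: "(\<lambda>k. norm (b k)) summable_on UNIV" using sa by (simp add: b_def)
  have convb: "b m = (\<Sum>\<^sub>\<infinity>j. b j * b (m - j))" for m
  proof -
    have s: "(\<lambda>j. a j * a (m - j)) summable_on UNIV"
    proof (rule abs_summable_summable)
      have "(\<lambda>j. \<bar>a j\<bar> * B) summable_on UNIV" using sa by (rule summable_on_cmult_left)
      then show "(\<lambda>j. norm (a j * a (m - j))) summable_on UNIV"
        by (rule summable_on_comparison_test) (auto simp: abs_mult aB mult_left_mono)
    qed
    have "((\<lambda>j. complex_of_real (a j * a (m - j))) has_sum complex_of_real (\<Sum>\<^sub>\<infinity>j. a j * a (m - j))) UNIV"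
      by (rule has_sum_of_real[OF has_sum_infsum[OF s]])
    then have "(\<Sum>\<^sub>\<infinity>j. b j * b (m - j)) = complex_of_real (\<Sum>\<^sub>\<infinity>j. a j * a (m - j))"
      unfolding b_def by (simp add: infsumI)
    then show ?thesis using conv1[of m] by (simp add: b_def)
  qed
  have adich: "(\<forall>m. a m = 0) \<or> (\<forall>m. a m = (if m = 0 then 1 else 0))"
  proof -
    have ab: "a m = Re (b m)" for m by (simp add: b_def)
    from idem_l1[OF sb convb] show ?thesis
    proof
      assume "\<forall>m. b m = 0" then show ?thesis by (simp add: ab)
    next
      assume "\<forall>m. b m = (if m = 0 then 1 else 0)" then show ?thesis by (simp add: ab)
    qed
  qed
  have formula: "apply_bcontfun (\<Phi> v) n = (\<Sum>\<^sub>\<infinity>k. apply_bcontfun v k * a (k - n))" if "v \<in> c0" for v n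
    using phi_c0[OF bl comm that, of n] by (simp add: sh)
  show ?thesis
  proof (cases "\<forall>m. a m = 0")
    case True
    have "singular_map \<Phi>" unfolding singular_map_def
    proof
      fix v assume "v \<in> c0"
      show "\<Phi> v = 0" by (rule bcontfun_eqI) (simp add: formula[OF \<open>v \<in> c0\<close>] True)
    qed
    then show ?thesis by blast
  next
    case False
    then have ad: "a m = (if m = 0 then 1 else 0)" for m using adich by blast
    have idc0: "\<Phi> v = v" if "v \<in> c0" for v
    proof (rule bcontfun_eqI)
      fix n
      have "(\<Sum>\<^sub>\<infinity>k. apply_bcontfun v k * a (k - n)) = (\<Sum>\<^sub>\<infinity>k\<in>{n}. apply_bcontfun v k)"
        by (rule infsum_cong_neutral) (auto simp: ad)
      then show "apply_bcontfun (\<Phi> v) n = apply_bcontfun v n" by (simp add: formula[OF that])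
    qed
    define \<Psi> where "\<Psi> v = v - \<Phi> v" for v
    have "linear \<Psi>"
      unfolding \<Psi>_def[abs_def] by (intro linear_compose_sub linear_id lin) (simp add: linear_id[unfolded id_def])
    moreover have "singular_map \<Psi>" unfolding singular_map_def \<Psi>_def by (simp add: idc0)
    moreover have "\<Psi> \<circ> \<Psi> = \<Psi>"
    proof
      fix v
      have "\<Phi> (\<Phi> v) = \<Phi> v" using idem by (metis comp_apply)
      then show "(\<Psi> \<circ> \<Psi>) v = \<Psi> v" unfolding \<Psi>_def using lin by (simp add: linear_diff)
    qed
    moreover have "\<forall>v. \<Psi> (backshift v) = backshift (\<Psi> v)"
      unfolding \<Psi>_def using comm by (simp add: backshift_diff)
    moreover have "\<Phi> = (\<lambda>v. v - \<Psi> v)" unfolding \<Psi>_def by auto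
    ultimately show ?thesis by blast
  qed
qed

end
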